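(* Let $l\ge1$ and $m\ge n\ge0$ be integers with $m\ge1$. Let $\tilde D=\tilde D_1\cdots\tilde D_m$ be registers each with state space $\mathbb C^{2^l}$ and let $E$ be an additional register with Hilbert space $\mathcal H_E$. Let $|\psi\rangle_{\tilde DE}\in W^m_n\otimes\mathcal H_E$ be a normalized state such that for every operator $A$ acting on $\tilde D$ and every permutation $\pi\in S_m$, $\|A_{\tilde D}\pi_{\tilde D}|\psi\rangle_{\tilde DE}\|=\|A_{\tilde D}|\psi\rangle_{\tilde DE}\|$. Then \[\big\|\langle 0^l|_{\tilde D_1}|\psi\rangle_{\tilde DE}\big\|^2\ge\frac{2^{-l}n}{m}-2^{1-l/2}\sqrt{\frac{n(m-n)}{m^2}}.\]
   Context: $|+^l\rangle=2^{-l/2}\sum_{y\in\{0,1\}^l}|y\rangle$. For $m\ge n$, \[W^m_n=\mathrm{span}\Big\{|+^l\rangle^{\otimes|S|}_{\tilde D_S}\otimes|\phi\rangle_{\tilde D_{S^c}}\ :\ S\subseteq[m],\ |S|\ge n,\ |\phi\rangle\in(\mathbb C^{2^l})^{\otimes(m-|S|)}\Big\}\subseteq(\mathbb C^{2^l})^{\otimes m}.\] A permutation $\pi\in S_m$ acts on $\tilde D$ by permuting subregisters: $\pi|y_1\rangle\cdots|y_m\rangle=|y_{\pi^{-1}(1)}\rangle\cdots|y_{\pi^{-1}(m)}\rangle$. *)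

theory Defs
  imports "HOL-Analysis.Analysis"
begin

text \<open>Registers D_1..D_m are indexed by 0..m-1; a computational basis state of
  the register D is a tuple y with y i in {0..<2^l} for i < m.
  A vector of (C^(2^l))^(tensor m) tensor H_E is represented by its coefficient function
  psi y e, where e ranges over an (arbitrary) orthonormal basis of H_E.\<close>

definition basisD :: "nat \<Rightarrow> nat \<Rightarrow> (nat \<Rightarrow> nat) set" where
  "basisD l m = ({0..<m} \<rightarrow>\<^sub>E {0..<2^l})"

definition in_DE :: "nat \<Rightarrow> nat \<Rightarrow> ((nat \<Rightarrow> nat) \<Rightarrow> 'e \<Rightarrow> complex) \<Rightarrow> bool" where
  "in_DE l m psi \<longleftrightarrow> (\<forall>y\<in>basisD l m. (\<lambda>e. (cmod (psi y e))\<^sup>2) summable_on UNIV)"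

definition sqnorm :: "nat \<Rightarrow> nat \<Rightarrow> ((nat \<Rightarrow> nat) \<Rightarrow> 'e \<Rightarrow> complex) \<Rightarrow> real" where
  "sqnorm l m psi = (\<Sum>y\<in>basisD l m. \<Sum>\<^sub>\<infinity>e. (cmod (psi y e))\<^sup>2)"

definition vnorm :: "nat \<Rightarrow> nat \<Rightarrow> ((nat \<Rightarrow> nat) \<Rightarrow> 'e \<Rightarrow> complex) \<Rightarrow> real" where
  "vnorm l m psi = sqrt (sqnorm l m psi)"

definition applyD :: "nat \<Rightarrow> nat \<Rightarrow> ((nat \<Rightarrow> nat) \<Rightarrow> (nat \<Rightarrow> nat) \<Rightarrow> complex)
    \<Rightarrow> ((nat \<Rightarrow> nat) \<Rightarrow> 'e \<Rightarrow> complex) \<Rightarrow> ((nat \<Rightarrow> nat) \<Rightarrow> 'e \<Rightarrow> complex)" where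
  "applyD l m A psi = (\<lambda>y e. \<Sum>y'\<in>basisD l m. A y y' * psi y' e)"

text \<open>A permutation pi of the subregisters: pi |y_1>...|y_m> = |y_(pi^-1 1)>...|y_(pi^-1 m)>,
  so the coefficient of the basis state y' in pi psi is the coefficient of y' o pi in psi.\<close>
definition permD :: "(nat \<Rightarrow> nat) \<Rightarrow> ((nat \<Rightarrow> nat) \<Rightarrow> 'e \<Rightarrow> complex) \<Rightarrow> ((nat \<Rightarrow> nat) \<Rightarrow> 'e \<Rightarrow> complex)" where
  "permD \<pi> psi = (\<lambda>y e. psi (y \<circ> \<pi>) e)"

text \<open>Generators of W^m_n: |+^l>^{tensor S} on D_S tensor an arbitrary |phi> on D_{S^c},
  where phi is a vector of (C^(2^l))^(tensor (m-|S|)) given by its coefficients on basis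
  states of D_{S^c}.\<close>
definition W_gens :: "nat \<Rightarrow> nat \<Rightarrow> nat \<Rightarrow> ((nat \<Rightarrow> nat) \<Rightarrow> complex) set" where
  "W_gens l m n = {v. \<exists>S \<phi>. S \<subseteq> {0..<m} \<and> card S \<ge> n \<and>
      v = (\<lambda>y. complex_of_real ((2 powr (- real l / 2)) ^ card S) * \<phi> (restrict y ({0..<m} - S)))}"

definition in_W :: "nat \<Rightarrow> nat \<Rightarrow> nat \<Rightarrow> ((nat \<Rightarrow> nat) \<Rightarrow> complex) \<Rightarrow> bool" where
  "in_W l m n v \<longleftrightarrow> (\<exists>k (c :: nat \<Rightarrow> complex) g. (\<forall>j<k. g j \<in> W_gens l m n) \<and>
      (\<forall>y\<in>basisD l m. v y = (\<Sum>j<k. c j * g j y)))"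

text \<open>psi in W^m_n tensor H_E: every H_E-coordinate slice lies in W^m_n
  (W is a finite-dimensional, hence closed, subspace).\<close>
definition in_W_E :: "nat \<Rightarrow> nat \<Rightarrow> nat \<Rightarrow> ((nat \<Rightarrow> nat) \<Rightarrow> 'e \<Rightarrow> complex) \<Rightarrow> bool" where
  "in_W_E l m n psi \<longleftrightarrow> in_DE l m psi \<and> (\<forall>e. in_W l m n (\<lambda>y. psi y e))"

definition sqnorm_bra0_D1 :: "nat \<Rightarrow> nat \<Rightarrow> ((nat \<Rightarrow> nat) \<Rightarrow> 'e \<Rightarrow> complex) \<Rightarrow> real" where
  "sqnorm_bra0_D1 l m psi = (\<Sum>y\<in>{y\<in>basisD l m. y 0 = 0}. \<Sum>\<^sub>\<infinity>e. (cmod (psi y e))\<^sup>2)"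

end

theory Submission imports Defs begin

definition Pv :: "nat \<Rightarrow> nat \<Rightarrow> ((nat \<Rightarrow> nat) \<Rightarrow> complex) \<Rightarrow> ((nat \<Rightarrow> nat) \<Rightarrow> complex)" where
  "Pv l i f = (\<lambda>y. (\<Sum>x<2^l. f (y(i:=x))) / of_nat (2^l))"

definition nrm :: "nat \<Rightarrow> nat \<Rightarrow> ((nat \<Rightarrow> nat) \<Rightarrow> complex) \<Rightarrow> real" where
  "nrm l m f = (\<Sum>y\<in>basisD l m. (cmod (f y))\<^sup>2)"

lemma basisD_upd: "y \<in> basisD l m \<Longrightarrow> i < m \<Longrightarrow> x < 2^l \<Longrightarrow> y(i:=x) \<in> basisD l m"
  by (auto simp: basisD_def PiE_iff extensional_def)

lemma basisD_val: "y \<in> basisD l m \<Longrightarrow> i < m \<Longrightarrow> y i < 2^l"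
  by (auto simp: basisD_def PiE_iff)

lemma finite_basisD: "finite (basisD l m)"
  by (simp add: basisD_def finite_PiE)

lemma sum_avg:
  fixes F :: "(nat \<Rightarrow> nat) \<Rightarrow> 'a::comm_ring_1"
  assumes "i < m"
  shows "(\<Sum>y\<in>basisD l m. \<Sum>x<2^l. F (y(i:=x))) = of_nat (2^l) * (\<Sum>y\<in>basisD l m. F y)"
proof -
  have "(\<Sum>y\<in>basisD l m. \<Sum>x<2^l. F (y(i:=x))) = (\<Sum>(y,x)\<in>basisD l m \<times> {..<(2::nat)^l}. F (y(i:=x)))"
    by (simp add: sum.cartesian_product)
  also have "\<dots> = (\<Sum>(y,x)\<in>basisD l m \<times> {..<(2::nat)^l}. F y)"
    by (rule sum.reindex_bij_witness[where i="\<lambda>(y,x). (y(i:=x), y i)" and j="\<lambda>(y,x). (y(i:=x), y i)"])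
      (auto simp: basisD_upd basisD_val assms)
  also have "\<dots> = (\<Sum>y\<in>basisD l m. \<Sum>x<(2::nat)^l. F y)"
    using sum.cartesian_product[of "\<lambda>y x. F y" "{..<(2::nat)^l}" "basisD l m"] by simp
  also have "\<dots> = (\<Sum>y\<in>basisD l m. of_nat (2^l) * F y)"
    by simp
  also have "\<dots> = of_nat (2^l) * (\<Sum>y\<in>basisD l m. F y)"
    by (simp add: sum_distrib_left)
  finally show ?thesis .
qed

lemma Pv_upd[simp]: "Pv l i f (y(i:=x)) = Pv l i f y"
  by (simp add: Pv_def)

lemma Pv_comm: "Pv l i (Pv l j f) = Pv l j (Pv l i f)"
proof (cases "i = j")
  case False
  show ?thesis
  proof
    fix y
    have "(\<Sum>x<(2::nat)^l. (\<Sum>z<(2::nat)^l. f (y(i:=x, j:=z))) / of_nat (2^l))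
        = (\<Sum>x<(2::nat)^l. \<Sum>z<(2::nat)^l. f (y(i:=x, j:=z))) / of_nat (2^l)"
      by (simp only: sum_divide_distrib)
    also have "(\<Sum>x<(2::nat)^l. \<Sum>z<(2::nat)^l. f (y(i:=x, j:=z))) = (\<Sum>z<(2::nat)^l. \<Sum>x<(2::nat)^l. f (y(i:=x, j:=z)))"
      by (rule sum.swap)
    also have "\<dots> = (\<Sum>z<(2::nat)^l. \<Sum>x<(2::nat)^l. f (y(j:=z, i:=x)))"
      using False by (simp add: fun_upd_twist)
    also have "\<dots> / of_nat (2^l) = (\<Sum>z<(2::nat)^l. (\<Sum>x<(2::nat)^l. f (y(j:=z, i:=x))) / of_nat (2^l))"
      by (simp only: sum_divide_distrib)
    finally have eq: "(\<Sum>x<(2::nat)^l. (\<Sum>z<(2::nat)^l. f (y(i:=x, j:=z))) / of_nat (2^l))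
       = (\<Sum>z<(2::nat)^l. (\<Sum>x<(2::nat)^l. f (y(j:=z, i:=x))) / of_nat (2^l))" .
    show "Pv l i (Pv l j f) y = Pv l j (Pv l i f) y"
      unfolding Pv_def using arg_cong[OF eq, of "\<lambda>u. u / of_nat (2^l)"] by simp
  qed
qed simp

lemma Pv_diff: "Pv l i (\<lambda>y. f y - g y) = (\<lambda>y. Pv l i f y - Pv l i g y)"
  by (simp add: Pv_def sum_subtractf diff_divide_distrib)

lemma Pv_sum: "Pv l i (\<lambda>y. \<Sum>j<k. h j y) = (\<lambda>y. \<Sum>j<k. Pv l i (h j) y)"
  unfolding Pv_def by (rule ext) (simp add: sum_divide_distrib[symmetric] sum.swap[of _ "{..<k}"])

lemma Pv_zero: "Pv l i (\<lambda>_. 0) = (\<lambda>_. 0)"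
  by (simp add: Pv_def)

lemma Pv_idem: "Pv l i (Pv l i f) = Pv l i f"
  unfolding Pv_def by (rule ext) simp

lemma Pv_cong: "i < m \<Longrightarrow> \<forall>y\<in>basisD l m. f y = g y \<Longrightarrow> y \<in> basisD l m \<Longrightarrow> Pv l i f y = Pv l i g y"
  unfolding Pv_def by (auto intro!: sum.cong basisD_upd)

lemma nrm_cong: "\<forall>y\<in>basisD l m. f y = g y \<Longrightarrow> nrm l m f = nrm l m g"
  unfolding nrm_def by (auto intro!: sum.cong)

lemma nrm_nonneg: "nrm l m f \<ge> 0"
  unfolding nrm_def by (auto intro!: sum_nonneg)

lemma pyth:
  assumes "i < m"
  shows "nrm l m f = nrm l m (Pv l i f) + nrm l m (\<lambda>y. f y - Pv l i f y)"
proof -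
  define p where "p = Pv l i f"
  define G where "G y = (cmod (f y))\<^sup>2 - (cmod (f y - p y))\<^sup>2" for y
  have pt: "(\<Sum>x<(2::nat)^l. G (y(i:=x))) = of_nat (2^l) * (cmod (p y))\<^sup>2" for y
  proof -
    have sumf: "(\<Sum>x<(2::nat)^l. f (y(i:=x))) = of_nat (2^l) * p y"
      by (simp add: p_def Pv_def)
    have re: "(\<Sum>x<(2::nat)^l. Re (f (y(i:=x)))) = of_nat (2^l) * Re (p y)"
      using arg_cong[OF sumf, of Re] by (simp add: Re_sum)
    have im: "(\<Sum>x<(2::nat)^l. Im (f (y(i:=x)))) = of_nat (2^l) * Im (p y)"
      using arg_cong[OF sumf, of Im] by (simp add: Im_sum)
    have "G (y(i:=x)) = 2*(Re (f (y(i:=x))) * Re (p y) + Im (f (y(i:=x))) * Im (p y)) - (cmod (p y))\<^sup>2" for x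
      unfolding G_def p_def Pv_upd cmod_power2 by (simp add: power2_eq_square algebra_simps)
    then have "(\<Sum>x<(2::nat)^l. G (y(i:=x))) = (\<Sum>x<(2::nat)^l. 2 * Re (p y) * Re (f (y(i:=x))) + 2 * Im (p y) * Im (f (y(i:=x))) - (cmod (p y))\<^sup>2)"
      by (intro sum.cong) (simp_all add: algebra_simps)
    also have "\<dots> = 2 * Re (p y) * (\<Sum>x<(2::nat)^l. Re (f (y(i:=x)))) + 2 * Im (p y) * (\<Sum>x<(2::nat)^l. Im (f (y(i:=x)))) - of_nat (2^l) * (cmod (p y))\<^sup>2"
      by (simp add: sum.distrib sum_subtractf sum_distrib_left)
    also have "\<dots> = of_nat (2^l) * (cmod (p y))\<^sup>2"
      unfolding re im cmod_power2 by (simp add: power2_eq_square algebra_simps)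
    finally show ?thesis .
  qed
  have "of_nat (2^l) * (\<Sum>y\<in>basisD l m. G y) = of_nat (2^l) * (\<Sum>y\<in>basisD l m. (cmod (p y))\<^sup>2)"
    using sum_avg[OF assms, of G l] by (simp add: pt sum_distrib_left)
  then have "(\<Sum>y\<in>basisD l m. G y) = (\<Sum>y\<in>basisD l m. (cmod (p y))\<^sup>2)"
    by simp
  then show ?thesis
    unfolding nrm_def p_def[symmetric] G_def by (simp add: sum_subtractf)
qed

lemma nrm_Pv_le: "i < m \<Longrightarrow> nrm l m (Pv l i f) \<le> nrm l m f"
  using pyth[of i m l f] nrm_nonneg[of l m "\<lambda>y. f y - Pv l i f y"] by linarith

lemma fiber:
  fixes G :: "(nat \<Rightarrow> nat) \<Rightarrow> real"
  assumes "i < m" and inv: "\<And>y x. G (y(i:=x)) = G y"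
  shows "(\<Sum>y\<in>{y\<in>basisD l m. y i = 0}. G y) = (\<Sum>y\<in>basisD l m. G y) / of_nat (2^l)"
proof -
  define F where "F y = (if y i = 0 then G y else 0)" for y
  have "(\<Sum>y\<in>basisD l m. \<Sum>x<(2::nat)^l. F (y(i:=x))) = (\<Sum>y\<in>basisD l m. G y)"
  proof (rule sum.cong[OF refl])
    fix y
    have "(\<Sum>x<(2::nat)^l. F (y(i:=x))) = (\<Sum>x<(2::nat)^l. if x = 0 then G y else 0)"
      by (rule sum.cong) (auto simp: F_def inv)
    also have "\<dots> = G y" by (simp add: sum.delta)
    finally show "(\<Sum>x<(2::nat)^l. F (y(i:=x))) = G y" .
  qed
  moreover have "(\<Sum>y\<in>basisD l m. F y) = (\<Sum>y\<in>{y\<in>basisD l m. y i = 0}. G y)"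
    by (simp add: F_def sum.inter_filter[OF finite_basisD])
  ultimately show ?thesis
    using sum_avg[OF assms(1), of F l] by (simp add: field_simps)
qed

lemma ptineq:
  fixes p r :: complex and t :: real
  assumes "t > 0"
  shows "(cmod (p + r))\<^sup>2 \<ge> (1 - t) * (cmod p)\<^sup>2 - (cmod r)\<^sup>2 / t"
proof -
  have c: "cmod (p + r) \<ge> \<bar>cmod p - cmod r\<bar>"
    using norm_triangle_ineq3[of p "-r"] by simp
  have "(cmod (p + r))\<^sup>2 \<ge> (cmod p - cmod r)\<^sup>2"
    using c by (metis abs_ge_zero power2_abs power_mono)
  moreover have "(cmod p - cmod r)\<^sup>2 \<ge> (1 - t) * (cmod p)\<^sup>2 - (cmod r)\<^sup>2 / t"
  proof -
    have "t * ((cmod p - cmod r)\<^sup>2 - ((1 - t) * (cmod p)\<^sup>2 - (cmod r)\<^sup>2 / t)) = (t * cmod p - cmod r)\<^sup>2 + t * (cmod r)\<^sup>2"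
      using assms by (simp add: field_simps power2_eq_square)
    also have "\<dots> \<ge> 0" using assms by simp
    finally show ?thesis using assms by (simp add: zero_le_mult_iff)
  qed
  ultimately show ?thesis by linarith
qed

definition Zc :: "nat \<Rightarrow> nat \<Rightarrow> nat \<Rightarrow> ((nat \<Rightarrow> nat) \<Rightarrow> complex) \<Rightarrow> real" where
  "Zc l m i f = (\<Sum>y\<in>{y\<in>basisD l m. y i = 0}. (cmod (f y))\<^sup>2)"

lemma Zbound:
  assumes "i < m" "t > 0"
  shows "Zc l m i f \<ge> (1 - t) * nrm l m (Pv l i f) / of_nat (2^l) - nrm l m (\<lambda>y. f y - Pv l i f y) / t"
proof -
  let ?B0 = "{y\<in>basisD l m. y i = 0}"
  have "Zc l m i f = (\<Sum>y\<in>?B0. (cmod (Pv l i f y + (f y - Pv l i f y)))\<^sup>2)"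
    by (simp add: Zc_def)
  also have "\<dots> \<ge> (\<Sum>y\<in>?B0. (1 - t) * (cmod (Pv l i f y))\<^sup>2 - (cmod (f y - Pv l i f y))\<^sup>2 / t)"
    by (rule sum_mono) (rule ptineq[OF assms(2)])
  finally have 1: "Zc l m i f \<ge> (\<Sum>y\<in>?B0. (1 - t) * (cmod (Pv l i f y))\<^sup>2 - (cmod (f y - Pv l i f y))\<^sup>2 / t)" .
  have 15: "(\<Sum>y\<in>?B0. (1 - t) * (cmod (Pv l i f y))\<^sup>2 - (cmod (f y - Pv l i f y))\<^sup>2 / t)
     = (1 - t) * (\<Sum>y\<in>?B0. (cmod (Pv l i f y))\<^sup>2) - (\<Sum>y\<in>?B0. (cmod (f y - Pv l i f y))\<^sup>2) / t"
    by (simp only: sum_subtractf sum_distrib_left sum_divide_distrib)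
  have 2: "(\<Sum>y\<in>?B0. (cmod (Pv l i f y))\<^sup>2) = nrm l m (Pv l i f) / of_nat (2^l)"
    unfolding nrm_def by (rule fiber[OF assms(1)]) simp
  have 3: "(\<Sum>y\<in>?B0. (cmod (f y - Pv l i f y))\<^sup>2) \<le> nrm l m (\<lambda>y. f y - Pv l i f y)"
    unfolding nrm_def by (rule sum_mono2[OF finite_basisD]) auto
  have "(\<Sum>y\<in>?B0. (cmod (f y - Pv l i f y))\<^sup>2) / t \<le> nrm l m (\<lambda>y. f y - Pv l i f y) / t"
    using 3 assms(2) by (simp add: divide_right_mono)
  moreover have "(1 - t) * (\<Sum>y\<in>?B0. (cmod (Pv l i f y))\<^sup>2) = (1 - t) * nrm l m (Pv l i f) / of_nat (2^l)"
    using 2 by simp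
  ultimately show ?thesis using 1 15 by linarith
qed

lemma key:
  assumes "finite I" "I \<subseteq> {..<m}"
    and "\<forall>j<k. h j = (\<lambda>_. 0) \<or> (\<exists>S\<subseteq>I. card S \<ge> n \<and> (\<forall>i\<in>S. Pv l i (h j) = h j))"
    and "\<forall>y\<in>basisD l m. v y = (\<Sum>j<k. h j y)"
  shows "(\<Sum>i\<in>I. nrm l m (Pv l i v)) \<ge> real n * nrm l m v"
  using assms
proof (induction I arbitrary: n h v rule: finite_induct)
  case empty
  show ?case
  proof (cases "n = 0")
    case True then show ?thesis by simp
  next
    case False
    have "\<forall>j<k. h j = (\<lambda>_. 0)"
    proof (intro allI impI)
      fix j assume "j < k"
      from empty.prems(2)[rule_format, OF this] False show "h j = (\<lambda>_. 0)" by auto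
    qed
    then have "\<forall>y\<in>basisD l m. v y = 0" using empty.prems(3) by simp
    then have "nrm l m v = 0" by (simp add: nrm_def)
    then show ?thesis by simp
  qed
next
  case (insert i0 I)
  have i0: "i0 < m" using insert.prems(1) by auto
  have Isub: "I \<subseteq> {..<m}" using insert.prems(1) by auto
  define P where "P = Pv l i0"
  define v1 where "v1 = P v"
  define v0 where "v0 = (\<lambda>y. v y - P v y)"
  define h1 where "h1 j = P (h j)" for j
  define h0 where "h0 j = (\<lambda>y. h j y - P (h j) y)" for j
  have h1ok: "\<forall>j<k. h1 j = (\<lambda>_. 0) \<or> (\<exists>S\<subseteq>I. card S \<ge> n - 1 \<and> (\<forall>i\<in>S. Pv l i (h1 j) = h1 j))"
  proof (intro allI impI)
    fix j assume "j < k"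
    from insert.prems(2)[rule_format, OF this]
    show "h1 j = (\<lambda>_. 0) \<or> (\<exists>S\<subseteq>I. card S \<ge> n - 1 \<and> (\<forall>i\<in>S. Pv l i (h1 j) = h1 j))"
    proof
      assume "h j = (\<lambda>_. 0)" then show ?thesis by (simp add: h1_def P_def Pv_zero)
    next
      assume "\<exists>S\<subseteq>insert i0 I. card S \<ge> n \<and> (\<forall>i\<in>S. Pv l i (h j) = h j)"
      then obtain S where S: "S \<subseteq> insert i0 I" "card S \<ge> n" "\<forall>i\<in>S. Pv l i (h j) = h j" by blast
      have "S - {i0} \<subseteq> I" using S(1) by auto
      moreover have "card (S - {i0}) \<ge> n - 1"
        using diff_card_le_card_Diff[of "{i0}" S] S(2) by simp
      moreover have "\<forall>i\<in>S - {i0}. Pv l i (h1 j) = h1 j"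
      proof
        fix i assume "i \<in> S - {i0}"
        have "Pv l i (Pv l i0 (h j)) = Pv l i0 (Pv l i (h j))" by (rule Pv_comm)
        then show "Pv l i (h1 j) = h1 j" using S(3) \<open>i \<in> S - {i0}\<close> by (simp add: h1_def P_def)
      qed
      ultimately show ?thesis by blast
    qed
  qed
  have h0ok: "\<forall>j<k. h0 j = (\<lambda>_. 0) \<or> (\<exists>S\<subseteq>I. card S \<ge> n \<and> (\<forall>i\<in>S. Pv l i (h0 j) = h0 j))"
  proof (intro allI impI)
    fix j assume "j < k"
    from insert.prems(2)[rule_format, OF this]
    show "h0 j = (\<lambda>_. 0) \<or> (\<exists>S\<subseteq>I. card S \<ge> n \<and> (\<forall>i\<in>S. Pv l i (h0 j) = h0 j))"
    proof
      assume "h j = (\<lambda>_. 0)" then show ?thesis by (simp add: h0_def P_def Pv_zero)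
    next
      assume "\<exists>S\<subseteq>insert i0 I. card S \<ge> n \<and> (\<forall>i\<in>S. Pv l i (h j) = h j)"
      then obtain S where S: "S \<subseteq> insert i0 I" "card S \<ge> n" "\<forall>i\<in>S. Pv l i (h j) = h j" by blast
      show ?thesis
      proof (cases "i0 \<in> S")
        case True
        then have "P (h j) = h j" using S(3) by (simp add: P_def)
        then show ?thesis by (simp add: h0_def)
      next
        case False
        then have "S \<subseteq> I" using S(1) by auto
        moreover have "\<forall>i\<in>S. Pv l i (h0 j) = h0 j"
        proof
          fix i assume iS: "i \<in> S"
          have "Pv l i (Pv l i0 (h j)) = Pv l i0 (Pv l i (h j))" by (rule Pv_comm)
          then show "Pv l i (h0 j) = h0 j" using S(3) iS by (simp add: h0_def P_def Pv_diff)
        qed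
        ultimately show ?thesis using S(2) by blast
      qed
    qed
  qed
  have v1ok: "\<forall>y\<in>basisD l m. v1 y = (\<Sum>j<k. h1 j y)"
  proof
    fix y assume y: "y \<in> basisD l m"
    have "v1 y = Pv l i0 (\<lambda>y. \<Sum>j<k. h j y) y"
      unfolding v1_def P_def by (rule Pv_cong[OF i0 insert.prems(3) y])
    also have "\<dots> = (\<Sum>j<k. h1 j y)" by (simp add: Pv_sum h1_def P_def)
    finally show "v1 y = (\<Sum>j<k. h1 j y)" .
  qed
  have v0ok: "\<forall>y\<in>basisD l m. v0 y = (\<Sum>j<k. h0 j y)"
  proof
    fix y assume y: "y \<in> basisD l m"
    have "P v y = (\<Sum>j<k. h1 j y)" using v1ok y by (simp add: v1_def)
    then show "v0 y = (\<Sum>j<k. h0 j y)"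
      using insert.prems(3) y by (simp add: v0_def h0_def h1_def sum_subtractf)
  qed
  have IH1: "real (n - 1) * nrm l m v1 \<le> (\<Sum>i\<in>I. nrm l m (Pv l i v1))"
    using insert.IH[OF Isub h1ok v1ok] .
  have IH0: "real n * nrm l m v0 \<le> (\<Sum>i\<in>I. nrm l m (Pv l i v0))"
    using insert.IH[OF Isub h0ok v0ok] .
  have dec: "nrm l m (Pv l i v) = nrm l m (Pv l i v1) + nrm l m (Pv l i v0)" for i
  proof -
    have c: "P (Pv l i v) = Pv l i (P v)" unfolding P_def by (rule Pv_comm)
    have "Pv l i v0 = (\<lambda>y. Pv l i v y - P (Pv l i v) y)"
      unfolding v0_def Pv_diff c ..
    then show ?thesis
      using pyth[OF i0, of l "Pv l i v"] Pv_comm[of l i0 i v] by (simp add: v1_def P_def)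
  qed
  have s1: "(\<Sum>i\<in>I. nrm l m (Pv l i v)) = (\<Sum>i\<in>I. nrm l m (Pv l i v1)) + (\<Sum>i\<in>I. nrm l m (Pv l i v0))"
    by (simp add: dec sum.distrib)
  have s2: "(\<Sum>i\<in>insert i0 I. nrm l m (Pv l i v)) = nrm l m v1 + (\<Sum>i\<in>I. nrm l m (Pv l i v))"
    using insert.hyps by (simp add: v1_def P_def)
  have s3: "nrm l m v = nrm l m v1 + nrm l m v0"
    using pyth[OF i0, of l v] by (simp add: v1_def v0_def P_def)
  show ?case
  proof (cases "n = 0")
    case True
    have "0 \<le> (\<Sum>i\<in>insert i0 I. nrm l m (Pv l i v))" by (intro sum_nonneg nrm_nonneg)
    then show ?thesis using True by simp
  next
    case False
    have a: "real (n - 1) * nrm l m v1 = real n * nrm l m v1 - nrm l m v1"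
      using False by (simp add: of_nat_diff algebra_simps)
    have b: "real n * nrm l m v = real n * nrm l m v1 + real n * nrm l m v0"
      using s3 by (simp add: algebra_simps)
    show ?thesis using IH1 IH0 s1 s2 a b by linarith
  qed
qed
lemma final_alg:
  fixes a s p Z :: real
  assumes s: "0 < s" "s \<le> 1" and a: "a = s\<^sup>2" and Z: "Z \<ge> 0" and p: "0 \<le> p" "p \<le> 1"
    and H: "\<And>t. t > 0 \<Longrightarrow> (1 - t) * a + 1 / t \<ge> 0 \<Longrightarrow> Z \<ge> ((1 - t) * a + 1 / t) * p - 1 / t"
  shows "Z \<ge> a * p - 2 * s * sqrt (p * (1 - p))"
proof -
  have apos: "a > 0" using a s by simp
  consider "p = 1" | "p < 1" "2 * p \<ge> 1" | "2 * p < 1" using p by linarith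
  then show ?thesis
  proof cases
    case 1
    show ?thesis
    proof (rule ccontr)
      assume "\<not> ?thesis"
      then have Za: "Z < a" using 1 by simp
      define t where "t = (a - Z) / (2 * a)"
      have t0: "t > 0" using Za apos by (simp add: t_def)
      have t1: "t \<le> 1 / 2" using Z apos by (simp add: t_def field_simps)
      have "(1 - t) * a + 1 / t \<ge> 0" using t0 t1 apos by (intro add_nonneg_nonneg) auto
      from H[OF t0 this] 1 have "Z \<ge> (1 - t) * a" by simp
      moreover have "(1 - t) * a = (a + Z) / 2" using apos by (simp add: t_def field_simps)
      ultimately show False using Za by simp
    qed
  next
    case 2
    have p0: "p > 0" using 2 by simp
    define q where "q = 1 - p"
    have q0: "q > 0" and qp: "q \<le> p" using 2 by (auto simp: q_def)
    define t' where "t' = sqrt q / sqrt p"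
    have t'0: "t' > 0" using p0 q0 by (simp add: t'_def)
    have t'1: "t' \<le> 1" using qp p0 by (simp add: t'_def real_sqrt_le_iff)
    define t where "t = t' / s"
    have t0: "t > 0" using t'0 s by (simp add: t_def)
    have c1: "(1 - t) * a + 1 / t = a - s * t' + s / t'"
      using s t'0 a by (simp add: t_def field_simps power2_eq_square)
    have "s * t' \<le> s / t'"
    proof -
      have "t' * t' \<le> 1" using t'0 t'1 by (simp add: mult_le_one)
      then show ?thesis using s t'0 by (simp add: field_simps)
    qed
    then have c1nn: "(1 - t) * a + 1 / t \<ge> 0" using c1 apos by linarith
    from H[OF t0 c1nn] have f1: "Z \<ge> (a - s * t' + s / t') * p - s / t'"
      using c1 s t'0 by (simp add: t_def)
    have f2: "(a - s * t' + s / t') * p - s / t' = a * p - s * (t' * p) - s * (q / t')"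
      using t'0 by (simp add: q_def field_simps)
    have "t' * p = sqrt (p * q)"
      using p0 by (simp add: t'_def real_sqrt_mult field_simps)
    then have e1: "s * (t' * p) = s * sqrt (p * q)" by simp
    have "q / t' = sqrt (p * q)"
      using p0 q0 by (simp add: t'_def real_sqrt_mult field_simps)
    then have e2: "s * (q / t') = s * sqrt (p * q)" by simp
    have "Z \<ge> a * p - 2 * s * sqrt (p * q)" using f1 f2 e1 e2 by linarith
    then show ?thesis by (simp add: q_def)
  next
    case 3
    have "sqrt (p * (1 - p)) \<ge> sqrt (p * p)" using 3 p by (intro real_sqrt_le_mono mult_left_mono) auto
    then have sq: "sqrt (p * (1 - p)) \<ge> p" using p by simp
    have "a \<le> 2 * s" using a s by (simp add: power2_eq_square)
    then have "a * p \<le> 2 * s * p" using p by (simp add: mult_right_mono)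
    also have "\<dots> \<le> 2 * s * sqrt (p * (1 - p))" using sq s by simp
    finally show ?thesis using Z by linarith
  qed
qed

lemma per_e:
  assumes t: "t > 0" and c1: "c1 = (1 - t) / of_nat (2^l) + 1 / t" "c1 \<ge> 0"
    and K: "(\<Sum>i<m. nrm l m (Pv l i v)) \<ge> real n * nrm l m v"
  shows "(\<Sum>i<m. Zc l m i v) \<ge> (c1 * real n - real m / t) * nrm l m v"
proof -
  have each: "Zc l m i v \<ge> c1 * nrm l m (Pv l i v) - nrm l m v / t" if "i < m" for i
  proof -
    have "Zc l m i v \<ge> (1 - t) * nrm l m (Pv l i v) / of_nat (2^l) - nrm l m (\<lambda>y. v y - Pv l i v y) / t"
      by (rule Zbound[OF that t])
    moreover have "nrm l m (\<lambda>y. v y - Pv l i v y) = nrm l m v - nrm l m (Pv l i v)"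
      using pyth[OF that, of l v] by simp
    moreover have "(1 - t) * nrm l m (Pv l i v) / of_nat (2^l) - (nrm l m v - nrm l m (Pv l i v)) / t
        = c1 * nrm l m (Pv l i v) - nrm l m v / t"
      using t by (simp add: c1(1) field_simps)
    ultimately show ?thesis by simp
  qed
  have "(\<Sum>i<m. Zc l m i v) \<ge> (\<Sum>i<m. c1 * nrm l m (Pv l i v) - nrm l m v / t)"
    by (rule sum_mono) (use each in auto)
  also have "(\<Sum>i<m. c1 * nrm l m (Pv l i v) - nrm l m v / t) = c1 * (\<Sum>i<m. nrm l m (Pv l i v)) - real m * nrm l m v / t"
    by (simp add: sum_subtractf sum_distrib_left)
  finally have s1: "(\<Sum>i<m. Zc l m i v) \<ge> c1 * (\<Sum>i<m. nrm l m (Pv l i v)) - real m * nrm l m v / t" .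
  have s2: "c1 * (\<Sum>i<m. nrm l m (Pv l i v)) \<ge> c1 * (real n * nrm l m v)"
    using K c1(2) by (rule mult_left_mono)
  have s3: "(c1 * real n - real m / t) * nrm l m v = c1 * (real n * nrm l m v) - real m * nrm l m v / t"
    by (simp add: algebra_simps)
  show ?thesis using s1 s2 s3 by linarith
qed

lemma gen_fixed:
  assumes "g \<in> W_gens l m n"
  shows "\<exists>S\<subseteq>{..<m}. card S \<ge> n \<and> (\<forall>i\<in>S. Pv l i (\<lambda>y. c * g y) = (\<lambda>y. c * g y))"
proof -
  from assms obtain S \<phi> where S: "S \<subseteq> {0..<m}" "card S \<ge> n"
    and g: "g = (\<lambda>y. complex_of_real ((2 powr (- real l / 2)) ^ card S) * \<phi> (restrict y ({0..<m} - S)))"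
    unfolding W_gens_def by blast
  have "Pv l i (\<lambda>y. c * g y) = (\<lambda>y. c * g y)" if "i \<in> S" for i
  proof
    fix y
    have r: "restrict (y(i:=x)) ({0..<m} - S) = restrict y ({0..<m} - S)" for x :: nat
      using that by (auto simp: restrict_def)
    have "g (y(i:=x)) = g y" for x :: nat by (simp add: g r)
    then show "Pv l i (\<lambda>y. c * g y) y = c * g y"
      by (simp add: Pv_def)
  qed
  then show ?thesis using S by (auto simp: atLeast0LessThan)
qed

lemma key_e:
  assumes "in_W l m n v"
  shows "(\<Sum>i<m. nrm l m (Pv l i v)) \<ge> real n * nrm l m v"
proof -
  from assms obtain k :: nat and c :: "nat \<Rightarrow> complex" and g where g: "\<forall>j<k. g j \<in> W_gens l m n"
    and v: "\<forall>y\<in>basisD l m. v y = (\<Sum>j<k. c j * g j y)"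
    unfolding in_W_def by blast
  define h where "h j = (\<lambda>y. c j * g j y)" for j
  have "\<forall>j<k. h j = (\<lambda>_. 0) \<or> (\<exists>S\<subseteq>{..<m}. card S \<ge> n \<and> (\<forall>i\<in>S. Pv l i (h j) = h j))"
    using gen_fixed g unfolding h_def by blast
  moreover have "\<forall>y\<in>basisD l m. v y = (\<Sum>j<k. h j y)" using v by (simp add: h_def)
  ultimately show ?thesis by (intro key) auto
qed

lemma basisD_comp:
  assumes "y \<in> basisD l m" "i < m" "0 < m"
  shows "y \<circ> Transposition.transpose 0 i \<in> basisD l m"
  using assms by (auto simp: basisD_def PiE_iff extensional_def Transposition.transpose_def)

lemma sym_i:
  assumes i: "i < m"
    and H: "\<forall>A \<pi>. \<pi> permutes {0..<m} \<longrightarrow>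
           vnorm l m (applyD l m A (permD \<pi> psi)) = vnorm l m (applyD l m A psi)"
  shows "(\<Sum>y\<in>{y\<in>basisD l m. y i = 0}. \<Sum>\<^sub>\<infinity>e. (cmod (psi y e))\<^sup>2) = sqnorm_bra0_D1 l m psi"
proof -
  have m0: "0 < m" using i by simp
  define A0 :: "(nat \<Rightarrow> nat) \<Rightarrow> (nat \<Rightarrow> nat) \<Rightarrow> complex" where
    "A0 y y' = (if y = y' \<and> y 0 = 0 then 1 else 0)" for y y'
  have app: "applyD l m A0 \<phi> y e = (if y 0 = 0 then \<phi> y e else 0)" if y: "y \<in> basisD l m" for \<phi> :: "(nat \<Rightarrow> nat) \<Rightarrow> 'e \<Rightarrow> complex" and y e
  proof -
    have "applyD l m A0 \<phi> y e = (\<Sum>y'\<in>basisD l m. if y' = y then (if y 0 = 0 then \<phi> y e else 0) else 0)"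
      unfolding applyD_def by (rule sum.cong) (auto simp: A0_def)
    also have "\<dots> = (if y 0 = 0 then \<phi> y e else 0)"
      using y by (simp add: sum.delta[OF finite_basisD])
    finally show ?thesis .
  qed
  have sq: "sqnorm l m (applyD l m A0 \<phi>) = (\<Sum>y\<in>{y\<in>basisD l m. y 0 = 0}. \<Sum>\<^sub>\<infinity>e. (cmod (\<phi> y e))\<^sup>2)"
    for \<phi> :: "(nat \<Rightarrow> nat) \<Rightarrow> 'e \<Rightarrow> complex"
  proof -
    have "sqnorm l m (applyD l m A0 \<phi>) = (\<Sum>y\<in>basisD l m. if y 0 = 0 then (\<Sum>\<^sub>\<infinity>e. (cmod (\<phi> y e))\<^sup>2) else 0)"
      unfolding sqnorm_def by (rule sum.cong) (auto simp: app)
    also have "\<dots> = (\<Sum>y\<in>{y\<in>basisD l m. y 0 = 0}. \<Sum>\<^sub>\<infinity>e. (cmod (\<phi> y e))\<^sup>2)"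
      by (simp add: sum.inter_filter[OF finite_basisD])
    finally show ?thesis .
  qed
  define \<pi> where "\<pi> = Transposition.transpose 0 i"
  have perm: "\<pi> permutes {0..<m}" unfolding \<pi>_def by (rule permutes_swap_id) (use i in auto)
  have "vnorm l m (applyD l m A0 (permD \<pi> psi)) = vnorm l m (applyD l m A0 psi)"
    using H perm by blast
  then have "sqnorm l m (applyD l m A0 (permD \<pi> psi)) = sqnorm l m (applyD l m A0 psi)"
    by (simp add: vnorm_def)
  then have eq: "(\<Sum>y\<in>{y\<in>basisD l m. y 0 = 0}. \<Sum>\<^sub>\<infinity>e. (cmod (psi (y \<circ> \<pi>) e))\<^sup>2) = sqnorm_bra0_D1 l m psi"
    by (simp add: sq permD_def sqnorm_bra0_D1_def)
  have inv: "y \<circ> \<pi> \<circ> \<pi> = y" for y :: "nat \<Rightarrow> nat"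
    by (simp add: \<pi>_def comp_assoc)
  have "(\<Sum>y\<in>{y\<in>basisD l m. y 0 = 0}. \<Sum>\<^sub>\<infinity>e. (cmod (psi (y \<circ> \<pi>) e))\<^sup>2)
      = (\<Sum>y\<in>{y\<in>basisD l m. y i = 0}. \<Sum>\<^sub>\<infinity>e. (cmod (psi y e))\<^sup>2)"
    by (rule sum.reindex_bij_witness[where i="\<lambda>y. y \<circ> \<pi>" and j="\<lambda>y. y \<circ> \<pi>"])
      (auto simp: inv basisD_comp[OF _ i m0] \<pi>_def)
  then show ?thesis using eq by simp
qed

lemma infsum_sum_swap:
  fixes f :: "'a \<Rightarrow> 'e \<Rightarrow> real"
  assumes "finite A" "\<And>x. x \<in> A \<Longrightarrow> f x summable_on E"
  shows "(\<lambda>e. \<Sum>x\<in>A. f x e) summable_on E \<and> infsum (\<lambda>e. \<Sum>x\<in>A. f x e) E = (\<Sum>x\<in>A. infsum (f x) E)"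
  using assms
proof (induction A rule: finite_induct)
  case empty then show ?case by simp
next
  case (insert a A)
  have sa: "f a summable_on E" using insert.prems by simp
  from insert.IH insert.prems have IH: "(\<lambda>e. \<Sum>x\<in>A. f x e) summable_on E"
      "infsum (\<lambda>e. \<Sum>x\<in>A. f x e) E = (\<Sum>x\<in>A. infsum (f x) E)" by auto
  show ?case
    using insert.hyps summable_on_add[OF sa IH(1)] infsum_add[OF sa IH(1)] IH(2) by simp
qed

theorem lemma7:
  fixes l m n :: nat
    and psi :: "(nat \<Rightarrow> nat) \<Rightarrow> 'e \<Rightarrow> complex"
  assumes "l \<ge> 1" and "m \<ge> n" and "m \<ge> 1"
    and "in_W_E l m n psi"
    and "sqnorm l m psi = 1"
    and "\<forall>A \<pi>. \<pi> permutes {0..<m} \<longrightarrow>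
           vnorm l m (applyD l m A (permD \<pi> psi)) = vnorm l m (applyD l m A psi)"
  shows "sqnorm_bra0_D1 l m psi \<ge>
           2 powr (- real l) * real n / real m
           - 2 powr (1 - real l / 2) * sqrt (real n * real (m - n) / (real m)\<^sup>2)"
proof -
  define Z where "Z = sqnorm_bra0_D1 l m psi"
  have m0: "0 < m" using assms(3) by simp
  have W: "\<forall>e. in_W l m n (\<lambda>y. psi y e)" and DE: "in_DE l m psi"
    using assms(4) by (auto simp: in_W_E_def)
  have summ: "\<And>y. y \<in> basisD l m \<Longrightarrow> (\<lambda>e. (cmod (psi y e))\<^sup>2) summable_on UNIV"
    using DE by (auto simp: in_DE_def)
  have swap_i: "(\<lambda>e. \<Sum>y\<in>{y\<in>basisD l m. y i = 0}. (cmod (psi y e))\<^sup>2) summable_on UNIV \<and>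
      infsum (\<lambda>e. \<Sum>y\<in>{y\<in>basisD l m. y i = 0}. (cmod (psi y e))\<^sup>2) UNIV
      = (\<Sum>y\<in>{y\<in>basisD l m. y i = 0}. \<Sum>\<^sub>\<infinity>e. (cmod (psi y e))\<^sup>2)" for i
    by (rule infsum_sum_swap) (auto simp: finite_basisD summ)
  have "(\<lambda>e. \<Sum>i<m. Zc l m i (\<lambda>y. psi y e)) summable_on UNIV \<and>
     infsum (\<lambda>e. \<Sum>i<m. Zc l m i (\<lambda>y. psi y e)) UNIV = (\<Sum>i<m. infsum (\<lambda>e. Zc l m i (\<lambda>y. psi y e)) UNIV)"
    by (rule infsum_sum_swap[where f="\<lambda>i e. Zc l m i (\<lambda>y. psi y e)"]) (use swap_i in \<open>auto simp: Zc_def\<close>)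
  then have Zcsumm: "(\<lambda>e. \<Sum>i<m. Zc l m i (\<lambda>y. psi y e)) summable_on UNIV"
    and Zcsum: "infsum (\<lambda>e. \<Sum>i<m. Zc l m i (\<lambda>y. psi y e)) UNIV = (\<Sum>i<m. infsum (\<lambda>e. Zc l m i (\<lambda>y. psi y e)) UNIV)"
    by auto
  have "(\<Sum>i<m. infsum (\<lambda>e. Zc l m i (\<lambda>y. psi y e)) UNIV) = (\<Sum>i<m. Z)"
  proof (rule sum.cong[OF refl])
    fix i assume "i \<in> {..<m}"
    then have i: "i < m" by simp
    show "infsum (\<lambda>e. Zc l m i (\<lambda>y. psi y e)) UNIV = Z"
      using swap_i[of i] sym_i[OF i assms(6)] by (simp add: Zc_def Z_def)
  qed
  then have mZ: "real m * Z = infsum (\<lambda>e. \<Sum>i<m. Zc l m i (\<lambda>y. psi y e)) UNIV"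
    using Zcsum by simp
  have "(\<lambda>e. nrm l m (\<lambda>y. psi y e)) summable_on UNIV \<and>
      infsum (\<lambda>e. nrm l m (\<lambda>y. psi y e)) UNIV = sqnorm l m psi"
    unfolding nrm_def sqnorm_def by (rule infsum_sum_swap) (auto simp: finite_basisD summ)
  then have Nsumm: "(\<lambda>e. nrm l m (\<lambda>y. psi y e)) summable_on UNIV"
    and Nsum: "infsum (\<lambda>e. nrm l m (\<lambda>y. psi y e)) UNIV = 1"
    using assms(5) by auto
  have Z0: "Z \<ge> 0"
    unfolding Z_def sqnorm_bra0_D1_def by (intro sum_nonneg infsum_nonneg) auto
  define a :: real where "a = 1 / 2^l"
  define p :: real where "p = real n / real m"
  have H: "Z \<ge> ((1 - t) * a + 1 / t) * p - 1 / t" if t: "t > 0" and c: "(1 - t) * a + 1 / t \<ge> 0" for t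
  proof -
    define c1 where "c1 = (1 - t) / of_nat (2^l) + 1 / t"
    have c1a: "c1 = (1 - t) * a + 1 / t" by (simp add: c1_def a_def)
    have c1: "c1 \<ge> 0" using c c1a by simp
    have pe: "(\<Sum>i<m. Zc l m i (\<lambda>y. psi y e)) \<ge> (c1 * real n - real m / t) * nrm l m (\<lambda>y. psi y e)" for e
      by (rule per_e[OF t c1_def c1 key_e[OF W[rule_format]]])
    have "infsum (\<lambda>e. (c1 * real n - real m / t) * nrm l m (\<lambda>y. psi y e)) UNIV
        \<le> infsum (\<lambda>e. \<Sum>i<m. Zc l m i (\<lambda>y. psi y e)) UNIV"
      by (rule infsum_mono[OF summable_on_cmult_right[OF Nsumm] Zcsumm pe])
    also have "infsum (\<lambda>e. (c1 * real n - real m / t) * nrm l m (\<lambda>y. psi y e)) UNIV = c1 * real n - real m / t"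
      using Nsum by (simp add: infsum_cmult_right[OF Nsumm])
    finally have "c1 * real n - real m / t \<le> real m * Z" using mZ by simp
    then have "(c1 * real n - real m / t) / real m \<le> Z"
      using m0 by (simp add: divide_le_eq mult.commute)
    moreover have "(c1 * real n - real m / t) / real m = c1 * p - 1 / t"
      using m0 by (simp add: p_def field_simps)
    ultimately show ?thesis using c1a by simp
  qed
  define s :: real where "s = 2 powr (- real l / 2)"
  have s0: "s > 0" by (simp add: s_def)
  have s1: "s \<le> 1" unfolding s_def using powr_mono[of "- real l / 2" 0 2] by simp
  have ss: "s\<^sup>2 = 2 powr (- real l)"
    unfolding s_def power2_eq_square powr_add[symmetric] by simp
  have a2: "2 powr (- real l) = a"
    by (simp add: a_def powr_minus_divide powr_realpow)
  have aS: "a = s\<^sup>2" using ss a2 by simp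
  have p01: "0 \<le> p" "p \<le> 1" using assms(2) m0 by (auto simp: p_def divide_le_eq_1)
  have fin: "Z \<ge> a * p - 2 * s * sqrt (p * (1 - p))"
    by (rule final_alg[OF s0 s1 aS Z0 p01 H])
  have e1: "2 powr (- real l) * real n / real m = a * p" by (simp add: a2 p_def)
  have e2: "2 powr (1 - real l / 2) = 2 * s"
    by (simp add: s_def powr_diff powr_minus_divide)
  have e3: "real n * real (m - n) / (real m)\<^sup>2 = p * (1 - p)"
    using m0 assms(2) by (simp add: p_def of_nat_diff field_simps power2_eq_square)
  show ?thesis using fin unfolding Z_def[symmetric] e1 e2 e3 by simp
qed

end
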